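(* Let $k\ge1$, let $GP=GP(3k,k)$ and let $C_O$ be its outer cycle $u_0u_1\dots u_{3k-1}u_0$. Let $\phi:E(C_O)\to\{1,2,3\}$ be a proper edge colouring of $C_O$. Then the following are equivalent: (i) there is a proper edge colouring $\gamma:E(GP)\to\{1,2,3\}$ with $\gamma|_{E(C_O)}=\phi$; (ii) there is a permutation $(a,b,c)$ of $(1,2,3)$ such that for every $i=1,\dots,k$, the triples $\phi_i$ and $\phi_{i+1}$ are adjacent vertices in one of the graphs $T$ or $H$ (defined below with this choice of $a,b,c$). Furthermore, if a colouring $\gamma$ as in (i) exists, it is unique.
   Context: $GP(3k,k)$ has vertex set $\{u_i,v_i : i\in\mathbb{Z}_{3k}\}$ and edges $u_iu_{i+1}$, $u_iv_i$, $v_iv_{i+k}$ for $i\in\mathbb{Z}_{3k}$ (indices modulo $3k$). For a colouring $\phi$ of (at least) the outer cycle, set, for $i=1,\dots,k+1$, $\phi_i=(\phi(u_iu_{i+1}),\phi(u_{k+i}u_{k+i+1}),\phi(u_{2k+i}u_{2k+i+1}))$ with indices modulo $3k$ (so $\phi_{k+1}=(\phi(u_{k+1}u_{k+2}),\phi(u_{2k+1}u_{2k+2}),\phi(u_1u_2))$). A triple $(x,y,z)$ is written $xyz$. Given a permutation $(a,b,c)$ of $(1,2,3)$, $T$ is the triangle with vertices $abc$, $bca$, $cab$, and $H$ is the $6$-cycle $aba - bcc - aab - cbc - baa - ccb - aba$ on the six indicated triples. *)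

theory Defs
  imports Main
begin

datatype gpv = U nat | V nat

definition oedge :: "nat \<Rightarrow> nat \<Rightarrow> gpv set" where
  "oedge k i = {U (i mod (3*k)), U ((i+1) mod (3*k))}"

definition outer_edges :: "nat \<Rightarrow> gpv set set" where
  "outer_edges k = {oedge k i | i. i < 3*k}"

definition GP_edges :: "nat \<Rightarrow> gpv set set" where
  "GP_edges k = outer_edges k
     \<union> {{U i, V i} | i. i < 3*k}
     \<union> {{V i, V ((i+k) mod (3*k))} | i. i < 3*k}"

definition proper_edge_colouring :: "gpv set set \<Rightarrow> (gpv set \<Rightarrow> nat) \<Rightarrow> bool" where
  "proper_edge_colouring E c \<longleftrightarrow>
     (\<forall>e\<in>E. c e \<in> {1,2,3}) \<and>
     (\<forall>e\<in>E. \<forall>e'\<in>E. e \<noteq> e' \<and> e \<inter> e' \<noteq> {} \<longrightarrow> c e \<noteq> c e')"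

definition phi_tr :: "nat \<Rightarrow> (gpv set \<Rightarrow> nat) \<Rightarrow> nat \<Rightarrow> nat \<times> nat \<times> nat" where
  "phi_tr k phi i = (phi (oedge k i), phi (oedge k (k+i)), phi (oedge k (2*k+i)))"

definition T_adj :: "nat \<Rightarrow> nat \<Rightarrow> nat \<Rightarrow> nat \<times> nat \<times> nat \<Rightarrow> nat \<times> nat \<times> nat \<Rightarrow> bool" where
  "T_adj a b c x y \<longleftrightarrow> x \<noteq> y \<and> x \<in> {(a,b,c),(b,c,a),(c,a,b)} \<and> y \<in> {(a,b,c),(b,c,a),(c,a,b)}"

definition H_edges :: "nat \<Rightarrow> nat \<Rightarrow> nat \<Rightarrow> ((nat \<times> nat \<times> nat) \<times> (nat \<times> nat \<times> nat)) set" where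
  "H_edges a b c = {((a,b,a),(b,c,c)), ((b,c,c),(a,a,b)), ((a,a,b),(c,b,c)),
                    ((c,b,c),(b,a,a)), ((b,a,a),(c,c,b)), ((c,c,b),(a,b,a))}"

definition H_adj :: "nat \<Rightarrow> nat \<Rightarrow> nat \<Rightarrow> nat \<times> nat \<times> nat \<Rightarrow> nat \<times> nat \<times> nat \<Rightarrow> bool" where
  "H_adj a b c x y \<longleftrightarrow> (x,y) \<in> H_edges a b c \<or> (y,x) \<in> H_edges a b c"

end

theory Submission
  imports Defs
begin

definition valid :: "nat\<times>nat\<times>nat \<Rightarrow> nat\<times>nat\<times>nat \<Rightarrow> bool" where
 "valid x y \<longleftrightarrow> (case x of (x1,x2,x3) \<Rightarrow> case y of (y1,y2,y3) \<Rightarrow>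
    x1 \<in> {1,2,3} \<and> x2 \<in> {1,2,3} \<and> x3 \<in> {1,2,3} \<and> y1 \<in> {1,2,3} \<and> y2 \<in> {1,2,3} \<and> y3 \<in> {1,2,3}
    \<and> x1 \<noteq> y1 \<and> x2 \<noteq> y2 \<and> x3 \<noteq> y3
    \<and> 6-x1-y1 \<noteq> 6-x2-y2 \<and> 6-x1-y1 \<noteq> 6-x3-y3 \<and> 6-x2-y2 \<noteq> 6-x3-y3)"
definition adjset :: "nat \<Rightarrow> nat \<Rightarrow> nat \<Rightarrow> ((nat\<times>nat\<times>nat)\<times>(nat\<times>nat\<times>nat)) set" where
 "adjset a b c = {(x,y). T_adj a b c x y \<or> H_adj a b c x y}"
definition verts :: "nat \<Rightarrow> nat \<Rightarrow> nat \<Rightarrow> (nat\<times>nat\<times>nat) set" where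
 "verts a b c = {(a,b,c),(b,c,a),(c,a,b),(a,b,a),(b,c,c),(a,a,b),(c,b,c),(b,a,a),(c,c,b)}"
definition E18 :: "nat \<Rightarrow> nat \<Rightarrow> nat \<Rightarrow> ((nat\<times>nat\<times>nat)\<times>(nat\<times>nat\<times>nat)) set" where
 "E18 a b c = {((a,b,c),(b,c,a)),((b,c,a),(a,b,c)),((a,b,c),(c,a,b)),((c,a,b),(a,b,c)),
    ((b,c,a),(c,a,b)),((c,a,b),(b,c,a)),
    ((a,b,a),(b,c,c)), ((b,c,c),(a,a,b)), ((a,a,b),(c,b,c)),
                    ((c,b,c),(b,a,a)), ((b,a,a),(c,c,b)), ((c,c,b),(a,b,a)),
    ((b,c,c),(a,b,a)), ((a,a,b),(b,c,c)), ((c,b,c),(a,a,b)),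
                    ((b,a,a),(c,b,c)), ((c,c,b),(b,a,a)), ((a,b,a),(c,c,b))}"

lemma perm3: "{a,b,c} = {1,2,3::nat} \<Longrightarrow>
  (a,b,c) \<in> {(1,2,3),(1,3,2),(2,1,3),(2,3,1),(3,1,2),(3,2,1)}"
proof -
  assume h: "{a,b,c} = {1,2,3::nat}"
  have a: "a = 1 \<or> a = 2 \<or> a = 3" using h by blast
  have b: "b = 1 \<or> b = 2 \<or> b = 3" using h by blast
  have c: "c = 1 \<or> c = 2 \<or> c = 3" using h by blast
  have m: "1 \<in> {a,b,c}" "2 \<in> {a,b,c}" "3 \<in> {a,b,c}" using h by blast+
  show ?thesis using a b c m by (elim disjE; simp)
qed

lemma adj_verts: "T_adj a b c w x \<or> H_adj a b c w x \<Longrightarrow> x \<in> verts a b c"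
  unfolding T_adj_def H_adj_def H_edges_def verts_def by auto

lemma adj_E18: "T_adj a b c x y \<or> H_adj a b c x y \<Longrightarrow> (x,y) \<in> E18 a b c"
  unfolding T_adj_def H_adj_def H_edges_def
  apply (elim disjE conjE insertE emptyE)
  apply (simp_all only: E18_def insert_iff prod.inject simp_thms)
  done

lemma perm_rule: "{a,b,c}={1,2,3::nat} \<Longrightarrow> Q 1 2 3 \<Longrightarrow> Q 1 3 2 \<Longrightarrow> Q 2 1 3 \<Longrightarrow> Q 2 3 1 \<Longrightarrow> Q 3 1 2 \<Longrightarrow> Q 3 2 1 \<Longrightarrow> Q a b c"
  using perm3[of a b c] by auto

lemma valid_y: "valid x (y1,y2,y3) \<Longrightarrow> y1 \<in> {1,2,3} \<and> y2 \<in> {1,2,3} \<and> y3 \<in> {1,2,3}"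
  by (cases x) (simp add: valid_def)

lemma valid_x: "valid (x1,x2,x3) y \<Longrightarrow> x1 \<in> {1,2,3} \<and> x2 \<in> {1,2,3} \<and> x3 \<in> {1,2,3}"
  by (cases y) (simp add: valid_def)

lemma B_0: "\<forall>x\<in>verts 1 2 3. \<forall>y1\<in>{1,2,3}. \<forall>y2\<in>{1,2,3}. \<forall>y3\<in>{1,2,3}. valid x (y1,y2,y3) \<longrightarrow> (x,(y1,y2,y3)) \<in> E18 1 2 3"
  unfolding verts_def valid_def E18_def by simp
lemma E_0: "\<forall>(x,y)\<in>E18 1 2 3. T_adj 1 2 3 x y \<or> H_adj 1 2 3 x y"
  unfolding E18_def T_adj_def H_adj_def H_edges_def by simp
lemma C_0: "\<forall>(x,y)\<in>E18 1 2 3. valid x y"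
  unfolding E18_def valid_def by simp
lemma B_1: "\<forall>x\<in>verts 1 3 2. \<forall>y1\<in>{1,2,3}. \<forall>y2\<in>{1,2,3}. \<forall>y3\<in>{1,2,3}. valid x (y1,y2,y3) \<longrightarrow> (x,(y1,y2,y3)) \<in> E18 1 3 2"
  unfolding verts_def valid_def E18_def by simp
lemma E_1: "\<forall>(x,y)\<in>E18 1 3 2. T_adj 1 3 2 x y \<or> H_adj 1 3 2 x y"
  unfolding E18_def T_adj_def H_adj_def H_edges_def by simp
lemma C_1: "\<forall>(x,y)\<in>E18 1 3 2. valid x y"
  unfolding E18_def valid_def by simp
lemma B_2: "\<forall>x\<in>verts 2 1 3. \<forall>y1\<in>{1,2,3}. \<forall>y2\<in>{1,2,3}. \<forall>y3\<in>{1,2,3}. valid x (y1,y2,y3) \<longrightarrow> (x,(y1,y2,y3)) \<in> E18 2 1 3"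
  unfolding verts_def valid_def E18_def by simp
lemma E_2: "\<forall>(x,y)\<in>E18 2 1 3. T_adj 2 1 3 x y \<or> H_adj 2 1 3 x y"
  unfolding E18_def T_adj_def H_adj_def H_edges_def by simp
lemma C_2: "\<forall>(x,y)\<in>E18 2 1 3. valid x y"
  unfolding E18_def valid_def by simp
lemma B_3: "\<forall>x\<in>verts 2 3 1. \<forall>y1\<in>{1,2,3}. \<forall>y2\<in>{1,2,3}. \<forall>y3\<in>{1,2,3}. valid x (y1,y2,y3) \<longrightarrow> (x,(y1,y2,y3)) \<in> E18 2 3 1"
  unfolding verts_def valid_def E18_def by simp
lemma E_3: "\<forall>(x,y)\<in>E18 2 3 1. T_adj 2 3 1 x y \<or> H_adj 2 3 1 x y"
  unfolding E18_def T_adj_def H_adj_def H_edges_def by simp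
lemma C_3: "\<forall>(x,y)\<in>E18 2 3 1. valid x y"
  unfolding E18_def valid_def by simp
lemma B_4: "\<forall>x\<in>verts 3 1 2. \<forall>y1\<in>{1,2,3}. \<forall>y2\<in>{1,2,3}. \<forall>y3\<in>{1,2,3}. valid x (y1,y2,y3) \<longrightarrow> (x,(y1,y2,y3)) \<in> E18 3 1 2"
  unfolding verts_def valid_def E18_def by simp
lemma E_4: "\<forall>(x,y)\<in>E18 3 1 2. T_adj 3 1 2 x y \<or> H_adj 3 1 2 x y"
  unfolding E18_def T_adj_def H_adj_def H_edges_def by simp
lemma C_4: "\<forall>(x,y)\<in>E18 3 1 2. valid x y"
  unfolding E18_def valid_def by simp
lemma B_5: "\<forall>x\<in>verts 3 2 1. \<forall>y1\<in>{1,2,3}. \<forall>y2\<in>{1,2,3}. \<forall>y3\<in>{1,2,3}. valid x (y1,y2,y3) \<longrightarrow> (x,(y1,y2,y3)) \<in> E18 3 2 1"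
  unfolding verts_def valid_def E18_def by simp
lemma E_5: "\<forall>(x,y)\<in>E18 3 2 1. T_adj 3 2 1 x y \<or> H_adj 3 2 1 x y"
  unfolding E18_def T_adj_def H_adj_def H_edges_def by simp
lemma C_5: "\<forall>(x,y)\<in>E18 3 2 1. valid x y"
  unfolding E18_def valid_def by simp

lemma B_gen: "\<forall>x\<in>verts a b c. \<forall>y1\<in>{1,2,3}. \<forall>y2\<in>{1,2,3}. \<forall>y3\<in>{1,2,3}. valid x (y1,y2,y3) \<longrightarrow> (x,(y1,y2,y3)) \<in> E18 a b c
   \<Longrightarrow> \<forall>(x,y)\<in>E18 a b c. T_adj a b c x y \<or> H_adj a b c x y
   \<Longrightarrow> x \<in> verts a b c \<Longrightarrow> valid x y \<Longrightarrow> T_adj a b c x y \<or> H_adj a b c x y"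
proof -
  assume h1: "\<forall>x\<in>verts a b c. \<forall>y1\<in>{1,2,3}. \<forall>y2\<in>{1,2,3}. \<forall>y3\<in>{1,2,3}. valid x (y1,y2,y3) \<longrightarrow> (x,(y1,y2,y3)) \<in> E18 a b c"
    and h2: "\<forall>(x,y)\<in>E18 a b c. T_adj a b c x y \<or> H_adj a b c x y" and xv: "x \<in> verts a b c" and v: "valid x y"
  obtain y1 y2 y3 where y: "y = (y1,y2,y3)" by (cases y) auto
  have "(x,y) \<in> E18 a b c" using h1 xv v valid_y[of x y1 y2 y3] unfolding y by blast
  then show ?thesis using h2 by blast
qed

lemma lemB_v: "{a,b,c}={1,2,3::nat} \<Longrightarrow> x \<in> verts a b c \<Longrightarrow> valid x y \<Longrightarrow> T_adj a b c x y \<or> H_adj a b c x y"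
  apply (erule perm_rule[where Q="\<lambda>a b c. x \<in> verts a b c \<longrightarrow> valid x y \<longrightarrow> T_adj a b c x y \<or> H_adj a b c x y", THEN mp, THEN mp])
  using B_gen[OF B_0 E_0] B_gen[OF B_1 E_1] B_gen[OF B_2 E_2] B_gen[OF B_3 E_3] B_gen[OF B_4 E_4] B_gen[OF B_5 E_5]
  by blast+

lemma lemB: "{a,b,c}={1,2,3::nat} \<Longrightarrow> T_adj a b c w x \<or> H_adj a b c w x \<Longrightarrow> valid x y \<Longrightarrow> T_adj a b c x y \<or> H_adj a b c x y"
  by (rule lemB_v[OF _ adj_verts])

lemma lemC: "{a,b,c}={1,2,3::nat} \<Longrightarrow> T_adj a b c x y \<or> H_adj a b c x y \<Longrightarrow> valid x y"
proof -
  assume h: "{a,b,c}={1,2,3::nat}" and j: "T_adj a b c x y \<or> H_adj a b c x y"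
  have e: "(x,y) \<in> E18 a b c" using adj_E18[OF j] .
  have "\<forall>(x,y)\<in>E18 a b c. valid x y"
    by (rule perm_rule[where Q="\<lambda>a b c. \<forall>(x,y)\<in>E18 a b c. valid x y", OF h C_0 C_1 C_2 C_3 C_4 C_5])
  then show ?thesis using e by blast
qed

lemma const_invalid: "\<forall>x\<in>{1,2,3}. \<forall>y1\<in>{1,2,3}. \<forall>y2\<in>{1,2,3}. \<forall>y3\<in>{1,2,3}. \<not> valid (x,x,x) (y1,y2,y3)"
  unfolding valid_def by simp

lemma cover: "\<forall>x1\<in>{1,2,3}. \<forall>x2\<in>{1,2,3}. \<forall>x3\<in>{1,2,3}. \<not>(x1 = x2 \<and> x2 = x3) \<longrightarrow> (x1,x2,x3) \<in> verts 1 2 3 \<union> verts 1 3 2 \<union> verts 2 1 3 \<union> verts 2 3 1 \<union> verts 3 1 2 \<union> verts 3 2 1"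
  unfolding verts_def by simp

lemma lemA: "valid x y \<Longrightarrow> \<exists>a b c. {a,b,c} = {1,2,3::nat} \<and> (T_adj a b c x y \<or> H_adj a b c x y)"
proof -
  assume v: "valid x y"
  obtain x1 x2 x3 y1 y2 y3 where xy: "x = (x1,x2,x3)" "y = (y1,y2,y3)" by (cases x; cases y) auto
  have xs: "x1 \<in> {1,2,3}" "x2 \<in> {1,2,3}" "x3 \<in> {1,2,3}" using valid_x[of x1 x2 x3 y] v xy by auto
  have ys: "y1 \<in> {1,2,3}" "y2 \<in> {1,2,3}" "y3 \<in> {1,2,3}" using valid_y[of x y1 y2 y3] v xy by auto
  have "\<not>(x1 = x2 \<and> x2 = x3)" using const_invalid xs ys v xy by blast
  then have "x \<in> verts 1 2 3 \<union> verts 1 3 2 \<union> verts 2 1 3 \<union> verts 2 3 1 \<union> verts 3 1 2 \<union> verts 3 2 1"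
    using cover xs xy by blast
  moreover have "{1,2,3} = {1,2,3::nat}" "{1,3,2} = {1,2,3::nat}" "{2,1,3} = {1,2,3::nat}"
     "{2,3,1} = {1,2,3::nat}" "{3,1,2} = {1,2,3::nat}" "{3,2,1} = {1,2,3::nat}" by auto
  ultimately show ?thesis using lemB_v v by (metis Un_iff)
qed

lemma mod_shift_ne: "0 < d \<Longrightarrow> d < n \<Longrightarrow> (j + d) mod n \<noteq> j mod (n::nat)"
proof
  assume a: "0 < d" "d < n" "(j + d) mod n = j mod n"
  then have "n dvd (j + d) - j" using mod_eq_dvd_iff_nat[of j "j+d" n] by simp
  then have "n dvd d" by simp
  with a show False using nat_dvd_not_less by blast
qed

lemma add3k: "a = x + 3*k \<Longrightarrow> a mod (3*k) = x mod (3*(k::nat))"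
  by simp

definition spk :: "nat \<Rightarrow> nat \<Rightarrow> gpv set" where
  "spk k j = {U (j mod (3*k)), V (j mod (3*k))}"
definition innk :: "nat \<Rightarrow> nat \<Rightarrow> gpv set" where
  "innk k m = {V (m mod (3*k)), V ((m+k) mod (3*k))}"
definition Sv :: "nat \<Rightarrow> (gpv set \<Rightarrow> nat) \<Rightarrow> nat \<Rightarrow> nat" where
  "Sv k phi j = 6 - phi (oedge k (j + 3*k - 1)) - phi (oedge k j)"

lemma oedge_mod: "oedge k (i mod (3*k)) = oedge k i"
  unfolding oedge_def by (simp add: mod_Suc_eq)

lemma oedge_cong: "i mod (3*k) = i' mod (3*k) \<Longrightarrow> oedge k i = oedge k i'"
  by (metis oedge_mod)

lemma innk_cong: "m mod (3*k) = m' mod (3*k) \<Longrightarrow> innk k m = innk k m'"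
  unfolding innk_def using mod_add_cong[of m "3*k" m' k k] by simp

lemma spk_cong: "m mod (3*k) = m' mod (3*k) \<Longrightarrow> spk k m = spk k m'"
  unfolding spk_def by simp

lemma third: "x\<in>{1,2,3} \<Longrightarrow> y\<in>{1,2,3} \<Longrightarrow> z\<in>{1,2,3::nat} \<Longrightarrow> x\<noteq>y \<Longrightarrow> z\<noteq>x \<Longrightarrow> z\<noteq>y \<Longrightarrow> z = 6-x-y"
  by (elim insertE emptyE; simp)
lemma third_props: "x\<in>{1,2,3} \<Longrightarrow> y\<in>{1,2,3::nat} \<Longrightarrow> x\<noteq>y \<Longrightarrow> 6-x-y \<in> {1,2,3} \<and> 6-x-y \<noteq> x \<and> 6-x-y \<noteq> y"
  by (elim insertE emptyE; simp)
lemma fourth: "a\<in>{1,2,3} \<Longrightarrow> b\<in>{1,2,3} \<Longrightarrow> c\<in>{1,2,3} \<Longrightarrow> d\<in>{1,2,3::nat} \<Longrightarrow> a\<noteq>b \<Longrightarrow> a\<noteq>c \<Longrightarrow> b\<noteq>c \<Longrightarrow> d\<noteq>b \<Longrightarrow> d\<noteq>c \<Longrightarrow> d = a"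
  by (elim insertE emptyE; simp)

lemma oedge_in: "k \<ge> 1 \<Longrightarrow> oedge k i \<in> outer_edges k"
  unfolding outer_edges_def
proof -
  assume "k \<ge> 1"
  then have "i mod (3*k) < 3*k" by simp
  then show "oedge k i \<in> {oedge k i |i. i < 3 * k}" using oedge_mod[of k i] by blast
qed

lemma outer_cases: "e \<in> outer_edges k \<Longrightarrow> \<exists>i. e = oedge k i"
  unfolding outer_edges_def by blast

lemma GP_cases: "e \<in> GP_edges k \<Longrightarrow> (\<exists>i. e = oedge k i) \<or> (\<exists>j. e = spk k j) \<or> (\<exists>m. e = innk k m)"
  unfolding GP_edges_def
proof (elim UnE)
  assume "e \<in> outer_edges k" then show ?thesis using outer_cases by blast
next
  assume "e \<in> {{U i, V i} |i. i < 3 * k}"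
  then obtain i where "e = {U i, V i}" "i < 3*k" by blast
  then have "e = spk k i" unfolding spk_def by simp
  then show ?thesis by blast
next
  assume "e \<in> {{V i, V ((i + k) mod (3 * k))} |i. i < 3 * k}"
  then obtain i where "e = {V i, V ((i + k) mod (3 * k))}" "i < 3*k" by blast
  then have "e = innk k i" unfolding innk_def by simp
  then show ?thesis by blast
qed

lemma spk_in: "k \<ge> 1 \<Longrightarrow> spk k j \<in> GP_edges k"
proof -
  assume "k \<ge> 1"
  then have "j mod (3*k) < 3*k" by simp
  then have "spk k j \<in> {{U i, V i} |i. i < 3 * k}" unfolding spk_def by blast
  then show ?thesis unfolding GP_edges_def by (intro UnI1 UnI2)
qed

lemma innk_in: "k \<ge> 1 \<Longrightarrow> innk k m \<in> GP_edges k"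
proof -
  assume "k \<ge> 1"
  then have "m mod (3*k) < 3*k" by simp
  moreover have "(m mod (3*k) + k) mod (3*k) = (m + k) mod (3*k)" by (simp add: mod_add_left_eq)
  ultimately have "innk k m \<in> {{V i, V ((i + k) mod (3 * k))} |i. i < 3 * k}" unfolding innk_def by force
  then show ?thesis unfolding GP_edges_def by (intro UnI2)
qed

lemma oedge_in_GP: "k \<ge> 1 \<Longrightarrow> oedge k i \<in> GP_edges k"
  using oedge_in unfolding GP_edges_def by (intro UnI1)

lemma spk_not_outer: "spk k j \<notin> outer_edges k"
  unfolding outer_edges_def spk_def oedge_def by auto
lemma innk_not_outer: "innk k j \<notin> outer_edges k"
  unfolding outer_edges_def innk_def oedge_def by auto
lemma innk_not_spk: "innk k m \<noteq> spk k j"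
  unfolding innk_def spk_def by auto
lemma spk_ne_oedge: "spk k j \<noteq> oedge k i"
  unfolding oedge_def spk_def by auto
lemma oedge_innk_disj: "oedge k i \<inter> innk k m = {}"
  unfolding oedge_def innk_def by auto

lemma spk_eq: "spk k j = spk k j' \<Longrightarrow> j mod (3*k) = j' mod (3*k)"
  unfolding spk_def by (metis doubleton_eq_iff gpv.inject(1) gpv.distinct(1))

context
  fixes k :: nat and phi :: "gpv set \<Rightarrow> nat"
  assumes k1: "k \<ge> 1" and pp: "proper_edge_colouring (outer_edges k) phi"
begin

lemma pc: "phi (oedge k i) \<in> {1,2,3}"
  using pp oedge_in[OF k1] unfolding proper_edge_colouring_def by blast

lemma pd: "phi (oedge k i) \<noteq> phi (oedge k (Suc i))"
proof -
  have n: "0 < (1::nat)" "1 < 3*k" "0 < (2::nat)" "2 < 3*k" using k1 by auto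
  have "Suc i mod (3*k) \<noteq> i mod (3*k)" "Suc (Suc i) mod (3*k) \<noteq> i mod (3*k)"
    using mod_shift_ne[OF n(1,2), of i] mod_shift_ne[OF n(3,4), of i] by simp_all
  then have "U (i mod (3*k)) \<notin> oedge k (Suc i)" unfolding oedge_def by simp
  moreover have "U (i mod (3*k)) \<in> oedge k i" unfolding oedge_def by simp
  ultimately have "oedge k i \<noteq> oedge k (Suc i)" by blast
  moreover have "oedge k i \<inter> oedge k (Suc i) \<noteq> {}" unfolding oedge_def by auto
  ultimately show ?thesis using pp oedge_in[OF k1] unfolding proper_edge_colouring_def by blast
qed

lemma Sv_cong: "a mod (3*k) = b mod (3*k) \<Longrightarrow> Sv k phi a = Sv k phi b"
proof -
  assume h: "a mod (3*k) = b mod (3*k)"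
  have e1: "oedge k (a + (3*k-1)) = oedge k (b + (3*k-1))"
    by (rule oedge_cong) (rule mod_add_cong[OF h refl])
  have q: "a + 3*k - 1 = a + (3*k-1)" "b + 3*k - 1 = b + (3*k-1)" using k1 by auto
  have e2: "oedge k a = oedge k b" by (rule oedge_cong[OF h])
  show ?thesis unfolding Sv_def q e1 e2 ..
qed

lemma Sv_3k: "Sv k phi (x + 3*k) = Sv k phi x"
  by (rule Sv_cong) simp

lemma prev_ne: "phi (oedge k (j + 3*k - 1)) \<noteq> phi (oedge k j)"
proof -
  have q: "Suc (j + 3*k - 1) = j + 3*k" using k1 by simp
  have "oedge k (j + 3*k) = oedge k j" by (rule oedge_cong) simp
  then have "oedge k (Suc (j + 3*k - 1)) = oedge k j" unfolding q .
  then show ?thesis using pd[of "j + 3*k - 1"] by simp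
qed

lemma Sv_props: "Sv k phi j \<in> {1,2,3} \<and> Sv k phi j \<noteq> phi (oedge k j) \<and> Sv k phi j \<noteq> phi (oedge k (j + 3*k - 1))"
  using third_props[OF pc pc prev_ne] unfolding Sv_def by blast

lemma Sv_Suc: "Sv k phi (Suc b) = 6 - phi (oedge k b) - phi (oedge k (Suc b))"
proof -
  have q: "Suc b + 3*k - 1 = b + 3*k" using k1 by simp
  have "oedge k (b + 3*k) = oedge k b" by (rule oedge_cong) simp
  then show ?thesis unfolding Sv_def q by simp
qed

end

context
  fixes k :: nat and phi :: "gpv set \<Rightarrow> nat"
  assumes k1: "k \<ge> 1" and pp: "proper_edge_colouring (outer_edges k) phi"
begin

lemma shifts: "(j + k) mod (3*k) \<noteq> j mod (3*k)" "(j + 2*k) mod (3*k) \<noteq> j mod (3*k)"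
  using mod_shift_ne[of k "3*k" j] mod_shift_ne[of "2*k" "3*k" j] k1 by auto

lemma forced:
  assumes g: "proper_edge_colouring (GP_edges k) \<gamma>" and ext: "\<forall>e\<in>outer_edges k. \<gamma> e = phi e"
  shows "\<forall>j. \<gamma> (spk k j) = Sv k phi j" and "\<forall>m. \<gamma> (innk k m) = Sv k phi (m+2*k)"
    and "\<forall>j. Sv k phi j \<noteq> Sv k phi (j+k)"
proof -
  have gr: "\<And>e. e \<in> GP_edges k \<Longrightarrow> \<gamma> e \<in> {1,2,3}" using g unfolding proper_edge_colouring_def by blast
  have gd: "\<And>e e'. e \<in> GP_edges k \<Longrightarrow> e' \<in> GP_edges k \<Longrightarrow> e \<noteq> e' \<Longrightarrow> e \<inter> e' \<noteq> {} \<Longrightarrow> \<gamma> e \<noteq> \<gamma> e'"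
    using g unfolding proper_edge_colouring_def by blast
  have sp: "\<gamma> (spk k j) = Sv k phi j" for j
  proof -
    let ?r = "j mod (3*k)"
    have q: "j + 3*k - 1 + 1 = j + 3*k" using k1 by simp
    have u0: "U ?r \<in> oedge k (j + 3*k - 1)" unfolding oedge_def q by simp
    have u1: "U ?r \<in> oedge k j" unfolding oedge_def by simp
    have us: "U ?r \<in> spk k j" unfolding spk_def by simp
    have n0: "\<gamma> (spk k j) \<noteq> \<gamma> (oedge k (j + 3*k - 1))"
      using gd[OF spk_in[OF k1] oedge_in_GP[OF k1] spk_ne_oedge] u0 us by blast
    have n1: "\<gamma> (spk k j) \<noteq> \<gamma> (oedge k j)"
      using gd[OF spk_in[OF k1] oedge_in_GP[OF k1] spk_ne_oedge] u1 us by blast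
    have e0: "\<gamma> (oedge k (j + 3*k - 1)) = phi (oedge k (j + 3*k - 1))" using ext oedge_in[OF k1] by blast
    have e1: "\<gamma> (oedge k j) = phi (oedge k j)" using ext oedge_in[OF k1] by blast
    have "\<gamma> (spk k j) = 6 - phi (oedge k (j + 3*k - 1)) - phi (oedge k j)"
      using third[OF pc[OF k1 pp] pc[OF k1 pp] gr[OF spk_in[OF k1]] prev_ne[OF k1 pp]] n0 n1 e0 e1 by simp
    then show ?thesis unfolding Sv_def .
  qed
  define g' where "g' m = \<gamma> (innk k m)" for m
  have A1: "Sv k phi j \<noteq> g' j \<and> Sv k phi j \<noteq> g' (j+2*k) \<and> g' j \<noteq> g' (j+2*k)" for j
  proof -
    let ?r = "j mod (3*k)"
    have q: "(j + 2*k + k) mod (3*k) = ?r" by (rule add3k) simp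
    have v1: "V ?r \<in> spk k j" unfolding spk_def by simp
    have v2: "V ?r \<in> innk k j" unfolding innk_def by simp
    have v3: "V ?r \<in> innk k (j+2*k)" unfolding innk_def q by simp
    have nn: "V ((j+k) mod (3*k)) \<notin> innk k (j+2*k)"
      using shifts(1)[of j] shifts(1)[of "j+k"] unfolding innk_def q by (simp add: add.assoc mult_2)
    have "innk k j \<noteq> innk k (j+2*k)" using nn unfolding innk_def by auto
    then have "g' j \<noteq> g' (j+2*k)" unfolding g'_def using gd[OF innk_in[OF k1] innk_in[OF k1]] v2 v3 by blast
    moreover have "\<gamma> (spk k j) \<noteq> g' j" unfolding g'_def
      using gd[OF spk_in[OF k1] innk_in[OF k1] innk_not_spk[symmetric]] v1 v2 by blast
    moreover have "\<gamma> (spk k j) \<noteq> g' (j+2*k)" unfolding g'_def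
      using gd[OF spk_in[OF k1] innk_in[OF k1] innk_not_spk[symmetric]] v1 v3 by blast
    ultimately show ?thesis using sp by simp
  qed
  have A2: "g' j \<noteq> g' (j+k)" for j
  proof -
    have q: "(j + k + k) = j + 2*k" by simp
    have w1: "V ((j+k) mod (3*k)) \<in> innk k j" unfolding innk_def by simp
    have w2: "V ((j+k) mod (3*k)) \<in> innk k (j+k)" unfolding innk_def by simp
    have nn: "V (j mod (3*k)) \<notin> innk k (j+k)"
      using shifts[of j] unfolding innk_def q by auto
    have "innk k j \<noteq> innk k (j+k)" using nn unfolding innk_def by auto
    then show ?thesis unfolding g'_def using gd[OF innk_in[OF k1] innk_in[OF k1]] w1 w2 by blast
  qed
  have grg: "g' m \<in> {1,2,3}" for m unfolding g'_def by (rule gr[OF innk_in[OF k1]])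
  have A3: "g' (j+k) = Sv k phi j" for j
  proof -
    have "g' (j+k) \<noteq> g' (j+2*k)" using A2[of "j+k"] by (simp add: mult_2 add.assoc)
    then show ?thesis using fourth[OF Sv_props[OF k1 pp, THEN conjunct1] grg grg grg] A1[of j] A2[of j] by metis
  qed
  show "\<forall>j. \<gamma> (spk k j) = Sv k phi j" using sp by blast
  show "\<forall>m. \<gamma> (innk k m) = Sv k phi (m+2*k)"
  proof
    fix m
    have "innk k (m + 2*k + k) = innk k m" by (rule innk_cong) (rule add3k, simp)
    then show "\<gamma> (innk k m) = Sv k phi (m+2*k)" using A3[of "m+2*k"] unfolding g'_def by simp
  qed
  show "\<forall>j. Sv k phi j \<noteq> Sv k phi (j+k)"
  proof
    fix j
    have "g' (j+k) \<noteq> g' (j+k+k)" by (rule A2)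
    moreover have "g' (j+k+k) = Sv k phi (j+k)" by (rule A3)
    ultimately show "Sv k phi j \<noteq> Sv k phi (j+k)" using A3[of j] by simp
  qed
qed

end

lemma innk_eq: "k \<ge> 1 \<Longrightarrow> innk k m = innk k m' \<Longrightarrow> m mod (3*k) = m' mod (3*k)"
proof (rule ccontr)
  assume k1: "k \<ge> 1" and e: "innk k m = innk k m'" and ne: "m mod (3*k) \<noteq> m' mod (3*k)"
  have "V (m mod (3*k)) \<in> innk k m'" using e unfolding innk_def by auto
  then have a: "m mod (3*k) = (m'+k) mod (3*k)" using ne unfolding innk_def by auto
  have "V (m' mod (3*k)) \<in> innk k m" using e unfolding innk_def by auto
  then have b: "m' mod (3*k) = (m+k) mod (3*k)" using ne unfolding innk_def by auto
  have "(m'+k) mod (3*k) = (m+k+k) mod (3*k)" using mod_add_cong[OF b, of k k] by simp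
  then have "(m + 2*k) mod (3*k) = m mod (3*k)" using a by (simp add: mult_2 add.assoc)
  then show False using mod_shift_ne[of "2*k" "3*k" m] k1 by simp
qed

context
  fixes k :: nat and phi :: "gpv set \<Rightarrow> nat"
  assumes k1: "k \<ge> 1" and pp: "proper_edge_colouring (outer_edges k) phi"
begin

definition gam :: "gpv set \<Rightarrow> nat" where
  "gam e = (if e \<in> outer_edges k then phi e
            else if (\<exists>j. e = spk k j) then Sv k phi (SOME j. e = spk k j)
            else Sv k phi ((SOME m. e = innk k m) + 2*k))"

lemma gam_o: "gam (oedge k i) = phi (oedge k i)"
  unfolding gam_def using oedge_in[OF k1] by simp

lemma gam_s: "gam (spk k j) = Sv k phi j"
proof -
  have "\<exists>j'. spk k j = spk k j'" by blast
  then have "spk k j = spk k (SOME j'. spk k j = spk k j')" by (rule someI_ex)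
  then have "Sv k phi (SOME j'. spk k j = spk k j') = Sv k phi j"
    using Sv_cong[OF k1 pp] spk_eq by metis
  then show ?thesis unfolding gam_def using spk_not_outer by auto
qed

lemma gam_i: "gam (innk k m) = Sv k phi (m + 2*k)"
proof -
  have "\<exists>m'. innk k m = innk k m'" by blast
  then have "innk k m = innk k (SOME m'. innk k m = innk k m')" by (rule someI_ex)
  then have "m mod (3*k) = (SOME m'. innk k m = innk k m') mod (3*k)" by (rule innk_eq[OF k1])
  then have "(m + 2*k) mod (3*k) = ((SOME m'. innk k m = innk k m') + 2*k) mod (3*k)"
    by (rule mod_add_cong) simp
  then have "Sv k phi ((SOME m'. innk k m = innk k m') + 2*k) = Sv k phi (m + 2*k)"
    using Sv_cong[OF k1 pp] by metis
  moreover have "\<not> (\<exists>j. innk k m = spk k j)" using innk_not_spk by blast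
  ultimately show ?thesis unfolding gam_def using innk_not_outer by simp
qed

context
  assumes Q: "\<forall>j. Sv k phi j \<noteq> Sv k phi (j+k)"
begin

lemma Q3: "Sv k phi (m + 2*k) \<noteq> Sv k phi m"
proof -
  have "Sv k phi (m+2*k) \<noteq> Sv k phi (m+2*k+k)" using Q by blast
  moreover have "Sv k phi (m+2*k+k) = Sv k phi m" by (rule Sv_cong[OF k1 pp]) (rule add3k, simp)
  ultimately show ?thesis by simp
qed

lemma OS: "oedge k i \<inter> spk k j \<noteq> {} \<Longrightarrow> Sv k phi j \<noteq> phi (oedge k i)"
proof -
  assume "oedge k i \<inter> spk k j \<noteq> {}"
  then have "U (j mod (3*k)) \<in> oedge k i" unfolding spk_def oedge_def by auto
  then have c: "j mod (3*k) = i mod (3*k) \<or> j mod (3*k) = (i+1) mod (3*k)" unfolding oedge_def by auto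
  then show ?thesis
  proof
    assume "j mod (3*k) = i mod (3*k)"
    then have "oedge k j = oedge k i" by (rule oedge_cong)
    then show ?thesis using Sv_props[OF k1 pp, of j] by simp
  next
    assume h: "j mod (3*k) = (i+1) mod (3*k)"
    have "(j + (3*k-1)) mod (3*k) = (i + 1 + (3*k-1)) mod (3*k)" by (rule mod_add_cong[OF h refl])
    moreover have "i + 1 + (3*k-1) = i + 3*k" "j + 3*k - 1 = j + (3*k-1)" using k1 by auto
    ultimately have "(j + 3*k - 1) mod (3*k) = i mod (3*k)" by simp
    then have "oedge k (j + 3*k - 1) = oedge k i" by (rule oedge_cong)
    then show ?thesis using Sv_props[OF k1 pp, of j] by simp
  qed
qed

lemma SS: "spk k j \<inter> spk k j' \<noteq> {} \<Longrightarrow> spk k j = spk k j'"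
  unfolding spk_def by auto

lemma SI: "spk k j \<inter> innk k m \<noteq> {} \<Longrightarrow> Sv k phi j \<noteq> Sv k phi (m + 2*k)"
proof -
  assume "spk k j \<inter> innk k m \<noteq> {}"
  then have "V (j mod (3*k)) \<in> innk k m" unfolding spk_def innk_def by auto
  then have c: "j mod (3*k) = m mod (3*k) \<or> j mod (3*k) = (m+k) mod (3*k)" unfolding innk_def by auto
  then show ?thesis
  proof
    assume "j mod (3*k) = m mod (3*k)"
    then have "Sv k phi j = Sv k phi m" by (rule Sv_cong[OF k1 pp])
    then show ?thesis using Q3[of m] by simp
  next
    assume "j mod (3*k) = (m+k) mod (3*k)"
    then have "Sv k phi j = Sv k phi (m+k)" by (rule Sv_cong[OF k1 pp])
    moreover have "Sv k phi (m+k) \<noteq> Sv k phi (m+k+k)" using Q by blast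
    ultimately show ?thesis by (simp add: mult_2 add.assoc)
  qed
qed

lemma II: "innk k m \<noteq> innk k m' \<Longrightarrow> innk k m \<inter> innk k m' \<noteq> {} \<Longrightarrow> Sv k phi (m + 2*k) \<noteq> Sv k phi (m' + 2*k)"
proof -
  assume ne: "innk k m \<noteq> innk k m'" and i: "innk k m \<inter> innk k m' \<noteq> {}"
  have nm: "m mod (3*k) \<noteq> m' mod (3*k)" using ne innk_cong by blast
  have nk: "(m+k) mod (3*k) \<noteq> (m'+k) mod (3*k)"
  proof
    assume h: "(m+k) mod (3*k) = (m'+k) mod (3*k)"
    have "(m+k+2*k) mod (3*k) = (m'+k+2*k) mod (3*k)" by (rule mod_add_cong[OF h refl])
    moreover have "(m+k+2*k) mod (3*k) = m mod (3*k)" "(m'+k+2*k) mod (3*k) = m' mod (3*k)" by (rule add3k, simp)+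
    ultimately show False using nm by simp
  qed
  from i obtain w where "w \<in> innk k m" "w \<in> innk k m'" by blast
  then have c: "m mod (3*k) = (m'+k) mod (3*k) \<or> (m+k) mod (3*k) = m' mod (3*k)"
    using nm nk unfolding innk_def by auto
  then show ?thesis
  proof
    assume h: "m mod (3*k) = (m'+k) mod (3*k)"
    have "(m + 2*k) mod (3*k) = (m'+k + 2*k) mod (3*k)" by (rule mod_add_cong[OF h refl])
    also have "\<dots> = m' mod (3*k)" by (rule add3k) simp
    finally have "Sv k phi (m+2*k) = Sv k phi m'" by (rule Sv_cong[OF k1 pp])
    then show ?thesis using Q3[of m'] by simp
  next
    assume h: "(m+k) mod (3*k) = m' mod (3*k)"
    have "(m' + 2*k) mod (3*k) = (m+k + 2*k) mod (3*k)" by (rule mod_add_cong[OF h[symmetric] refl])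
    also have "\<dots> = m mod (3*k)" by (rule add3k) simp
    finally have "Sv k phi (m'+2*k) = Sv k phi m" by (rule Sv_cong[OF k1 pp])
    then show ?thesis using Q3[of m] by simp
  qed
qed

lemma gam_proper: "proper_edge_colouring (GP_edges k) gam"
  unfolding proper_edge_colouring_def
proof (intro conjI ballI impI)
  fix e assume "e \<in> GP_edges k"
  then consider (o) i where "e = oedge k i" | (s) j where "e = spk k j" | (n) m where "e = innk k m"
    using GP_cases by blast
  then show "gam e \<in> {1,2,3}"
  proof cases
    case o then show ?thesis using gam_o pc[OF k1 pp] by simp
  next
    case s then show ?thesis using gam_s Sv_props[OF k1 pp] by simp
  next
    case n then show ?thesis using gam_i Sv_props[OF k1 pp] by simp
  qed
next
  fix e e' assume e: "e \<in> GP_edges k" and e': "e' \<in> GP_edges k" and h: "e \<noteq> e' \<and> e \<inter> e' \<noteq> {}"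
  have ne: "e \<noteq> e'" and it: "e \<inter> e' \<noteq> {}" and it': "e' \<inter> e \<noteq> {}" using h by blast+
  have ppd: "\<And>i i'. oedge k i \<noteq> oedge k i' \<Longrightarrow> oedge k i \<inter> oedge k i' \<noteq> {} \<Longrightarrow> phi (oedge k i) \<noteq> phi (oedge k i')"
    using pp oedge_in[OF k1] unfolding proper_edge_colouring_def by blast
  have c1: "(\<exists>i. e = oedge k i) \<or> (\<exists>j. e = spk k j) \<or> (\<exists>m. e = innk k m)" by (rule GP_cases[OF e])
  have c2: "(\<exists>i. e' = oedge k i) \<or> (\<exists>j. e' = spk k j) \<or> (\<exists>m. e' = innk k m)" by (rule GP_cases[OF e'])
  show "gam e \<noteq> gam e'"
  proof (cases "\<exists>i. e = oedge k i")
    case True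
    then obtain i where ei: "e = oedge k i" by blast
    show ?thesis
    proof (cases "\<exists>i'. e' = oedge k i'")
      case True
      then obtain i' where "e' = oedge k i'" by blast
      then show ?thesis using ppd[of i i'] ne it ei by (simp add: gam_o)
    next
      case False
      then consider (s) j where "e' = spk k j" | (n) m where "e' = innk k m" using c2 by blast
      then show ?thesis
      proof cases
        case (s j) then show ?thesis using OS[of i j] it ei by (simp add: gam_o gam_s)
      next
        case (n m) then show ?thesis using oedge_innk_disj[of k i m] it ei by simp
      qed
    qed
  next
    case False
    then consider (s) j where "e = spk k j" | (n) m where "e = innk k m" using c1 by blast
    then show ?thesis
    proof cases
      case (s j)
      consider (o) i where "e' = oedge k i" | (s) j' where "e' = spk k j'" | (n) m where "e' = innk k m" using c2 by blast
      then show ?thesis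
      proof cases
        case (o i) then show ?thesis using OS[of i j] it' \<open>e = spk k j\<close> by (simp add: gam_o gam_s)
      next
        case (s j') then show ?thesis using SS[of j j'] ne it \<open>e = spk k j\<close> by simp
      next
        case (n m) then show ?thesis using SI[of j m] it \<open>e = spk k j\<close> by (simp add: gam_s gam_i)
      qed
    next
      case (n m)
      consider (o) i where "e' = oedge k i" | (s) j where "e' = spk k j" | (n) m' where "e' = innk k m'" using c2 by blast
      then show ?thesis
      proof cases
        case (o i) then show ?thesis using oedge_innk_disj[of k i m] it' \<open>e = innk k m\<close> by simp
      next
        case (s j) then show ?thesis using SI[of j m] it' \<open>e = innk k m\<close> by (simp add: gam_s gam_i)
      next
        case (n m') then show ?thesis using II[of m m'] ne it \<open>e = innk k m\<close> by (simp add: gam_i)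
      qed
    qed
  qed
qed

end
end

context
  fixes k :: nat and phi :: "gpv set \<Rightarrow> nat"
  assumes k1: "k \<ge> 1" and pp: "proper_edge_colouring (outer_edges k) phi"
begin

lemma R: "valid (phi_tr k phi i) (phi_tr k phi (i+1)) \<longleftrightarrow>
   Sv k phi (Suc i) \<noteq> Sv k phi (Suc (k+i)) \<and> Sv k phi (Suc i) \<noteq> Sv k phi (Suc (2*k+i))
   \<and> Sv k phi (Suc (k+i)) \<noteq> Sv k phi (Suc (2*k+i))"
proof -
  have t1: "phi_tr k phi (i+1) = (phi (oedge k (Suc i)), phi (oedge k (Suc (k+i))), phi (oedge k (Suc (2*k+i))))"
    unfolding phi_tr_def by simp
  have t0: "phi_tr k phi i = (phi (oedge k i), phi (oedge k (k+i)), phi (oedge k (2*k+i)))"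
    unfolding phi_tr_def by simp
  show ?thesis unfolding t0 t1 valid_def Sv_Suc[OF k1 pp]
    using pc[OF k1 pp] pd[OF k1 pp] by simp
qed

lemma Q_iff: "(\<forall>j. Sv k phi j \<noteq> Sv k phi (j+k)) \<longleftrightarrow>
  (\<forall>i\<in>{1..k}. Sv k phi (Suc i) \<noteq> Sv k phi (Suc (k+i)) \<and> Sv k phi (Suc i) \<noteq> Sv k phi (Suc (2*k+i))
   \<and> Sv k phi (Suc (k+i)) \<noteq> Sv k phi (Suc (2*k+i)))" (is "?Q \<longleftrightarrow> ?T")
proof
  assume Q: ?Q
  show ?T
  proof
    fix i
    have a: "Sv k phi (Suc i) \<noteq> Sv k phi (Suc i + k)" using Q by blast
    have b: "Sv k phi (Suc (k+i)) \<noteq> Sv k phi (Suc (k+i) + k)" using Q by blast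
    have c: "Sv k phi (Suc (2*k+i)) \<noteq> Sv k phi (Suc (2*k+i) + k)" using Q by blast
    have d: "Sv k phi (Suc (2*k+i) + k) = Sv k phi (Suc i)" by (rule Sv_cong[OF k1 pp]) (rule add3k, simp)
    show "Sv k phi (Suc i) \<noteq> Sv k phi (Suc (k+i)) \<and> Sv k phi (Suc i) \<noteq> Sv k phi (Suc (2*k+i))
      \<and> Sv k phi (Suc (k+i)) \<noteq> Sv k phi (Suc (2*k+i))"
    proof -
      have "Suc i + k = Suc (k+i)" "Suc (k+i) + k = Suc (2*k+i)" by simp_all
      then show ?thesis using a b c d by metis
    qed
  qed
next
  assume T: ?T
  define TRI where "TRI j \<longleftrightarrow> Sv k phi j \<noteq> Sv k phi (j+k) \<and> Sv k phi (j+k) \<noteq> Sv k phi (j+2*k) \<and> Sv k phi j \<noteq> Sv k phi (j+2*k)" for j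
  have per: "TRI (j+k)" if "TRI j" for j
  proof -
    have "Sv k phi (j+k+2*k) = Sv k phi j" by (rule Sv_cong[OF k1 pp]) (rule add3k, simp)
    moreover have "j+k+k = j+2*k" by simp
    ultimately show ?thesis using that unfolding TRI_def by metis
  qed
  have all: "2 \<le> j \<longrightarrow> TRI j" for j
  proof (induction j rule: less_induct)
    case (less j)
    show ?case
    proof
      assume j2: "2 \<le> j"
      show "TRI j"
      proof (cases "j \<le> k+1")
        case True
        then have m: "j - 1 \<in> {1..k}" using j2 by auto
        have e: "Suc (j-1) = j" "Suc (k + (j-1)) = j+k" "Suc (2*k + (j-1)) = j+2*k" using j2 by auto
        have "Sv k phi (Suc (j-1)) \<noteq> Sv k phi (Suc (k+(j-1))) \<and> Sv k phi (Suc (j-1)) \<noteq> Sv k phi (Suc (2*k+(j-1)))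
          \<and> Sv k phi (Suc (k+(j-1))) \<noteq> Sv k phi (Suc (2*k+(j-1)))" using T m by blast
        then show ?thesis unfolding TRI_def e by blast
      next
        case False
        then have a: "2 \<le> j - k" "j - k < j" and b: "j - k + k = j" using k1 by auto
        have "TRI (j-k)" using less.IH[OF a(2)] a(1) by blast
        then have "TRI (j-k+k)" by (rule per)
        then show ?thesis unfolding b .
      qed
    qed
  qed
  show ?Q
  proof
    fix j
    have "TRI (j + 3*k)" using all k1 by simp
    then have "Sv k phi (j+3*k) \<noteq> Sv k phi (j+3*k+k)" unfolding TRI_def by simp
    moreover have "Sv k phi (j+3*k) = Sv k phi j" by (rule Sv_3k[OF k1 pp])
    moreover have "Sv k phi (j+3*k+k) = Sv k phi (j+k)" by (rule Sv_cong[OF k1 pp]) (rule add3k, simp)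
    ultimately show "Sv k phi j \<noteq> Sv k phi (j+k)" by simp
  qed
qed

end

lemma chain:
  assumes k1: "k \<ge> (1::nat)" and V: "\<forall>i\<in>{1..k}. valid (p i) (p (i+1))"
  shows "\<exists>a b c. {a,b,c} = {1,2,3::nat} \<and> (\<forall>i\<in>{1..k}. T_adj a b c (p i) (p (i+1)) \<or> H_adj a b c (p i) (p (i+1)))"
proof -
  have V': "valid (p i) (p (Suc i))" if "1 \<le> i" "i \<le> k" for i
  proof -
    have "i \<in> {1..k}" using that by simp
    then have "valid (p i) (p (i+1))" using V by blast
    then show ?thesis by simp
  qed
  have "valid (p (Suc 0)) (p (Suc (Suc 0)))" using V'[of "Suc 0"] k1 by simp
  then have "\<exists>a b c. {a,b,c} = {1,2,3::nat} \<and> (T_adj a b c (p (Suc 0)) (p (Suc (Suc 0))) \<or> H_adj a b c (p (Suc 0)) (p (Suc (Suc 0))))"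
    by (rule lemA)
  then obtain a b c where abc: "{a,b,c} = {1,2,3::nat}" and ad: "T_adj a b c (p (Suc 0)) (p (Suc (Suc 0))) \<or> H_adj a b c (p (Suc 0)) (p (Suc (Suc 0)))"
    by iprover
  have st: "1 \<le> i \<longrightarrow> i \<le> k \<longrightarrow> T_adj a b c (p i) (p (Suc i)) \<or> H_adj a b c (p i) (p (Suc i))" for i
  proof (induction i)
    case 0 then show ?case by simp
  next
    case (Suc i)
    show ?case
    proof (intro impI)
      assume h: "1 \<le> Suc i" "Suc i \<le> k"
      show "T_adj a b c (p (Suc i)) (p (Suc (Suc i))) \<or> H_adj a b c (p (Suc i)) (p (Suc (Suc i)))"
      proof (cases "i = 0")
        case True then show ?thesis using ad by simp
      next
        case False
        then have i1: "1 \<le> i" "i \<le> k" using h by auto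
        then have "T_adj a b c (p i) (p (Suc i)) \<or> H_adj a b c (p i) (p (Suc i))" using Suc.IH by blast
        moreover have "valid (p (Suc i)) (p (Suc (Suc i)))" by (rule V'[OF h(1) h(2)])
        ultimately show ?thesis by (rule lemB[OF abc])
      qed
    qed
  qed
  have "\<forall>i\<in>{1..k}. T_adj a b c (p i) (p (i+1)) \<or> H_adj a b c (p i) (p (i+1))"
  proof
    fix i assume "i \<in> {1..k}"
    then have "1 \<le> i" "i \<le> k" by auto
    then show "T_adj a b c (p i) (p (i+1)) \<or> H_adj a b c (p i) (p (i+1))" using st[of i] by simp
  qed
  then show ?thesis using abc by iprover
qed


theorem lemma3:
  fixes k :: nat and phi :: "gpv set \<Rightarrow> nat"
  assumes "k \<ge> 1"
    and "proper_edge_colouring (outer_edges k) phi"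
  shows "((\<exists>\<gamma>. proper_edge_colouring (GP_edges k) \<gamma> \<and> (\<forall>e\<in>outer_edges k. \<gamma> e = phi e))
          \<longleftrightarrow>
          (\<exists>a b c. {a,b,c} = {1,2,3::nat} \<and>
             (\<forall>i\<in>{1..k}. T_adj a b c (phi_tr k phi i) (phi_tr k phi (i+1))
                        \<or> H_adj a b c (phi_tr k phi i) (phi_tr k phi (i+1)))))
       \<and> (\<forall>\<gamma>1 \<gamma>2. proper_edge_colouring (GP_edges k) \<gamma>1 \<and> (\<forall>e\<in>outer_edges k. \<gamma>1 e = phi e)
              \<and> proper_edge_colouring (GP_edges k) \<gamma>2 \<and> (\<forall>e\<in>outer_edges k. \<gamma>2 e = phi e)
              \<longrightarrow> (\<forall>e\<in>GP_edges k. \<gamma>1 e = \<gamma>2 e))"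
proof -
  note k1 = assms(1) and pp = assms(2)
  let ?Q = "\<forall>j. Sv k phi j \<noteq> Sv k phi (j+k)"
  let ?V = "\<forall>i\<in>{1..k}. valid (phi_tr k phi i) (phi_tr k phi (i+1))"
  have VQ: "?V \<longleftrightarrow> ?Q" using R[OF k1 pp] Q_iff[OF k1 pp] by simp
  have AQ: "(\<exists>\<gamma>. proper_edge_colouring (GP_edges k) \<gamma> \<and> (\<forall>e\<in>outer_edges k. \<gamma> e = phi e)) \<longleftrightarrow> ?Q"
  proof
    assume "\<exists>\<gamma>. proper_edge_colouring (GP_edges k) \<gamma> \<and> (\<forall>e\<in>outer_edges k. \<gamma> e = phi e)"
    then obtain \<gamma> where "proper_edge_colouring (GP_edges k) \<gamma>" "\<forall>e\<in>outer_edges k. \<gamma> e = phi e" by blast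
    then show ?Q using forced(3)[OF k1 pp] by blast
  next
    assume Q: ?Q
    have "\<forall>e\<in>outer_edges k. gam k phi e = phi e" using gam_def[OF k1 pp] by simp
    then show "\<exists>\<gamma>. proper_edge_colouring (GP_edges k) \<gamma> \<and> (\<forall>e\<in>outer_edges k. \<gamma> e = phi e)"
      using gam_proper[OF k1 pp Q] by blast
  qed
  have BV: "(\<exists>a b c. {a,b,c} = {1,2,3::nat} \<and>
             (\<forall>i\<in>{1..k}. T_adj a b c (phi_tr k phi i) (phi_tr k phi (i+1))
                        \<or> H_adj a b c (phi_tr k phi i) (phi_tr k phi (i+1)))) \<longleftrightarrow> ?V"
  proof
    assume "\<exists>a b c. {a,b,c} = {1,2,3::nat} \<and>
             (\<forall>i\<in>{1..k}. T_adj a b c (phi_tr k phi i) (phi_tr k phi (i+1))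
                        \<or> H_adj a b c (phi_tr k phi i) (phi_tr k phi (i+1)))"
    then obtain a b c where abc: "{a,b,c} = {1,2,3::nat}" and ad: "\<forall>i\<in>{1..k}. T_adj a b c (phi_tr k phi i) (phi_tr k phi (i+1))
                        \<or> H_adj a b c (phi_tr k phi i) (phi_tr k phi (i+1))" by iprover
    show ?V
    proof
      fix i assume "i \<in> {1..k}"
      then have "T_adj a b c (phi_tr k phi i) (phi_tr k phi (i+1)) \<or> H_adj a b c (phi_tr k phi i) (phi_tr k phi (i+1))"
        using ad by blast
      then show "valid (phi_tr k phi i) (phi_tr k phi (i+1))" by (rule lemC[OF abc])
    qed
  next
    assume ?V
    then show "\<exists>a b c. {a,b,c} = {1,2,3::nat} \<and>
             (\<forall>i\<in>{1..k}. T_adj a b c (phi_tr k phi i) (phi_tr k phi (i+1))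
                        \<or> H_adj a b c (phi_tr k phi i) (phi_tr k phi (i+1)))"
      by (rule chain[OF k1])
  qed
  have U: "\<forall>\<gamma>1 \<gamma>2. proper_edge_colouring (GP_edges k) \<gamma>1 \<and> (\<forall>e\<in>outer_edges k. \<gamma>1 e = phi e)
              \<and> proper_edge_colouring (GP_edges k) \<gamma>2 \<and> (\<forall>e\<in>outer_edges k. \<gamma>2 e = phi e)
              \<longrightarrow> (\<forall>e\<in>GP_edges k. \<gamma>1 e = \<gamma>2 e)"
  proof (intro allI impI ballI)
    fix \<gamma>1 \<gamma>2 e
    assume h: "proper_edge_colouring (GP_edges k) \<gamma>1 \<and> (\<forall>e\<in>outer_edges k. \<gamma>1 e = phi e)
              \<and> proper_edge_colouring (GP_edges k) \<gamma>2 \<and> (\<forall>e\<in>outer_edges k. \<gamma>2 e = phi e)"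
      and e: "e \<in> GP_edges k"
    have g1: "proper_edge_colouring (GP_edges k) \<gamma>1" "\<forall>e\<in>outer_edges k. \<gamma>1 e = phi e" using h by blast+
    have g2: "proper_edge_colouring (GP_edges k) \<gamma>2" "\<forall>e\<in>outer_edges k. \<gamma>2 e = phi e" using h by blast+
    note f1 = forced[OF k1 pp g1] and f2 = forced[OF k1 pp g2]
    from GP_cases[OF e] show "\<gamma>1 e = \<gamma>2 e"
    proof (elim disjE exE)
      fix i assume "e = oedge k i"
      then show ?thesis using g1(2) g2(2) oedge_in[OF k1, of i] by simp
    next
      fix j assume "e = spk k j"
      then show ?thesis using f1(1) f2(1) by simp
    next
      fix m assume "e = innk k m"
      then show ?thesis using f1(2) f2(2) by simp
    qed
  qed
  show ?thesis using AQ BV VQ U by blast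
qed


end
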